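(* Under Hypothesis (H), define the functions $A_+:=n^2+(\mathrm{tr}S)^2-(\mathrm{tr}P)^2-(\mathrm{tr}(SP))^2+\mathrm{tr}(SPSP)-n-2n\,\mathrm{tr}(S)+2\,\mathrm{tr}(P)\mathrm{tr}(SP)$ and $A_-:=n^2+(\mathrm{tr}S)^2-(\mathrm{tr}P)^2-(\mathrm{tr}(SP))^2+\mathrm{tr}(SPSP)-n+2n\,\mathrm{tr}(S)-2\,\mathrm{tr}(P)\mathrm{tr}(SP)$ on $M$. Then: (i) $A_+\ge0$ and $A_-\ge0$ on $M$. (ii) If $\mathrm{rk}\,E_+(S)=1$ then $A_-\equiv0$. If $\mathrm{rk}\,E_+(S)\ge2$, then for every $x\in M$: $A_-(x)=0$ if and only if there exists $\varepsilon\in\{-1,1\}$ with $E_+(S)_x\subseteq E_\varepsilon(P)_x$. (iii) If $\mathrm{rk}\,E_-(S)=1$ then $A_+\equiv0$. If $\mathrm{rk}\,E_-(S)\ge2$, then for every $x\in M$: $A_+(x)=0$ if and only if there exists $\varepsilon\in\{-1,1\}$ with $E_-(S)_x\subseteq E_\varepsilon(P)_x$.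
   Context: Let $(M,g)$ be a Riemannian manifold of dimension $n$ with Levi-Civita connection $\nabla$; vectors and 1-forms are identified via $g$. For vectors $X,Y$, $X\odot Y$ is the endomorphism $Z\mapsto\langle X,Z\rangle Y+\langle Y,Z\rangle X$. Hypothesis (H): $M$ is oriented, compact, connected; $\theta$ is a 1-form on $M$, not identically zero (the Lee form of the Weyl connection $D_XY=\nabla_XY+\theta(Y)X+\theta(X)Y-\langle X,Y\rangle\theta^\sharp$); $S$ is a $g$-orthogonal involution of $\mathrm{T}M$, $S\neq\pm\mathrm{Id}$, with $DS=0$, equivalently $\nabla_XS=SX\odot\theta-S\theta\odot X$ for all $X$; $P$ is a $\nabla$-parallel $g$-orthogonal involution of $\mathrm{T}M$, $P\neq\pm\mathrm{Id}$. For an involution $F$, $E_+(F)$ and $E_-(F)$ denote its $+1$ and $-1$ eigenbundles. *)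

theory Defs
  imports "HOL-Analysis.Analysis"
begin

text \<open>Pointwise (fibrewise) model: the tangent space at each point of M is identified
with real^'n (orthonormal frame), so endomorphism fields are matrix-valued maps.\<close>

definition orth_involution :: "real^'n^'n \<Rightarrow> bool" where
  "orth_involution F \<longleftrightarrow> orthogonal_matrix F \<and> F ** F = mat 1"

definition eigsp :: "real^'n^'n \<Rightarrow> real \<Rightarrow> (real^'n) set" where
  "eigsp F e = {v. F *v v = e *\<^sub>R v}"

definition A_plus :: "real^'n^'n \<Rightarrow> real^'n^'n \<Rightarrow> real" where
  "A_plus S P = (let n = real CARD('n) in
     n^2 + (trace S)^2 - (trace P)^2 - (trace (S ** P))^2 + trace (S ** P ** S ** P)
     - n - 2 * n * trace S + 2 * trace P * trace (S ** P))"

definition A_minus :: "real^'n^'n \<Rightarrow> real^'n^'n \<Rightarrow> real" where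
  "A_minus S P = (let n = real CARD('n) in
     n^2 + (trace S)^2 - (trace P)^2 - (trace (S ** P))^2 + trace (S ** P ** S ** P)
     - n + 2 * n * trace S - 2 * trace P * trace (S ** P))"

end

theory Submission
  imports Defs
begin


definition outer :: "real^'n \<Rightarrow> real^'n \<Rightarrow> real^'n^'n" where
  "outer u v = (\<chi> i j. u$i * v$j)"

lemma outer_mv: "outer u v *v x = (v \<bullet> x) *\<^sub>R u"
  by (simp add: outer_def vec_eq_iff matrix_vector_mult_def inner_vec_def sum_distrib_left mult_ac)

lemma trace_outer_mult: "trace (outer u v ** X) = v \<bullet> (X *v u)"
  apply (simp add: trace_def outer_def matrix_matrix_mult_def matrix_vector_mult_def inner_vec_def sum_distrib_left sum_distrib_right mult_ac)
  apply (subst sum.swap) apply (simp add: mult_ac)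
  done

lemma mat_radd: "((A::real^'n^'n) + B) ** C = A ** C + B ** C"
  by (simp add: matrix_matrix_mult_def vec_eq_iff sum.distrib distrib_right)

lemma mat_rsub: "((A::real^'n^'n) - B) ** C = A ** C - B ** C"
  by (simp add: matrix_matrix_mult_def vec_eq_iff sum_subtractf left_diff_distrib)

lemma mat_lsub: "(C::real^'n^'n) ** (A - B) = C ** A - C ** B"
  by (simp add: matrix_matrix_mult_def vec_eq_iff sum_subtractf right_diff_distrib)

lemma mat_rsum: "finite I \<Longrightarrow> (\<Sum>i\<in>I. f i) ** (C::real^'n^'n) = (\<Sum>i\<in>I. (f i :: real^'n^'n) ** C)"
  by (induction I rule: finite_induct) (auto simp: mat_radd)

lemma mv_sum: "finite I \<Longrightarrow> (\<Sum>i\<in>I. f i) *v (x::real^'n) = (\<Sum>i\<in>I. (f i :: real^'n^'n) *v x)"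
  by (induction I rule: finite_induct) (auto simp: matrix_vector_mult_add_rdistrib)

lemma trace_sum: "finite I \<Longrightarrow> trace (\<Sum>i\<in>I. f i) = (\<Sum>i\<in>I. trace (f i :: real^'n^'n))"
  by (induction I rule: finite_induct) (auto simp: trace_add trace_0[simplified])

lemma oi_sym: "orth_involution F \<Longrightarrow> transpose F = F"
  unfolding orth_involution_def orthogonal_matrix_def
  by (metis matrix_mul_assoc matrix_mul_lid matrix_mul_rid)

lemma oi_sq: "orth_involution F \<Longrightarrow> F *v (F *v x) = x"
  unfolding orth_involution_def by (simp add: matrix_vector_mul_assoc)

lemma oi_sqm: "orth_involution F \<Longrightarrow> F ** F = mat 1"
  unfolding orth_involution_def by simp

lemma sym_inner: "transpose F = F \<Longrightarrow> (F *v x) \<bullet> y = x \<bullet> (F *v (y::real^'n))"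
  by (metis dot_lmul_matrix vector_transpose_matrix)

lemma on_expand:
  fixes B :: "(real^'n) set"
  assumes fin: "finite B" and orth: "pairwise orthogonal B" and unit: "\<And>b. b\<in>B \<Longrightarrow> b \<bullet> b = 1"
    and y: "y \<in> span B"
  shows "y = (\<Sum>b\<in>B. (b \<bullet> y) *\<^sub>R b)"
proof -
  define z where "z = y - (\<Sum>b\<in>B. (b \<bullet> y) *\<^sub>R b)"
  have ib: "c \<bullet> (\<Sum>b\<in>B. (b \<bullet> y) *\<^sub>R b) = c \<bullet> y" if c: "c \<in> B" for c
  proof -
    have "c \<bullet> (\<Sum>b\<in>B. (b \<bullet> y) *\<^sub>R b) = (\<Sum>b\<in>B. (b \<bullet> y) * (c \<bullet> b))"
      by (simp add: inner_sum_right)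
    also have "\<dots> = (c \<bullet> y) * (c \<bullet> c) + (\<Sum>b\<in>B-{c}. (b \<bullet> y) * (c \<bullet> b))"
      using fin c by (simp add: sum.remove)
    also have "(\<Sum>b\<in>B-{c}. (b \<bullet> y) * (c \<bullet> b)) = 0"
      using orth c by (intro sum.neutral) (auto simp: pairwise_def orthogonal_def)
    finally show ?thesis using unit c by simp
  qed
  have zs: "z \<in> span B" unfolding z_def
    by (rule span_diff[OF y], intro span_sum span_scale span_base)
  have "orthogonal z c" if "c \<in> B" for c
  proof -
    have "c \<bullet> z = 0" by (simp add: z_def inner_diff_right ib[OF that])
    thus ?thesis by (simp add: orthogonal_def inner_commute)
  qed
  hence "orthogonal z z" using orthogonal_to_span[OF zs] by blast
  hence "z = 0" by (simp add: orthogonal_self)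
  thus ?thesis by (simp add: z_def)
qed

lemma formula:
  fixes S P :: "real^'n^'n" and B :: "(real^'n) set"
  assumes oS: "orth_involution S" and oP: "orth_involution P"
    and fin: "finite B" and orth: "pairwise orthogonal B" and unit: "\<And>b. b\<in>B \<Longrightarrow> b \<bullet> b = 1"
    and spanB: "span B = eigsp S 1"
  shows "A_minus S P = 4 * ((real (card B))^2 - real (card B)
           + (\<Sum>b\<in>B. \<Sum>c\<in>B. ((P *v b) \<bullet> c)^2) - (\<Sum>b\<in>B. b \<bullet> (P *v b))^2)"
proof -
  have symS: "transpose S = S" using oS by (rule oi_sym)
  have symP: "transpose P = P" using oP by (rule oi_sym)
  have Sb: "S *v b = b" if "b \<in> B" for b
    using spanB span_base[OF that] by (auto simp: eigsp_def)
  define Pi where "Pi = (\<Sum>b\<in>B. outer b b)"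
  have Pix: "Pi *v x = (\<Sum>b\<in>B. (b \<bullet> x) *\<^sub>R b)" for x
    by (simp add: Pi_def mv_sum[OF fin] outer_mv)
  have Sx: "S *v x = Pi *v x + Pi *v x - x" for x
  proof -
    define y where "y = (1/2) *\<^sub>R (x + S *v x)"
    have "S *v y = y" using oi_sq[OF oS, of x]
      by (simp add: y_def algebra_simps)
    hence yE: "y \<in> span B" using spanB by (simp add: eigsp_def)
    have "b \<bullet> y = b \<bullet> x" if "b \<in> B" for b
    proof -
      have "b \<bullet> (S *v x) = (S *v b) \<bullet> x" using sym_inner[OF symS, of b x] by simp
      thus ?thesis using Sb[OF that] by (simp add: y_def inner_add_right)
    qed
    hence "y = Pi *v x" using on_expand[OF fin orth unit yE] Pix
      by (metis (no_types, lifting) sum.cong)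
    moreover have "S *v x = 2 *\<^sub>R y - x" by (simp add: y_def)
    ultimately show ?thesis by (simp add: scaleR_2)
  qed
  have Seq: "S = Pi + Pi - mat 1"
    by (subst matrix_eq) (simp only: Sx matrix_vector_mult_add_rdistrib matrix_vector_mult_diff_rdistrib matrix_vector_mul_lid, simp)
  have tPiX: "trace (Pi ** X) = (\<Sum>b\<in>B. b \<bullet> (X *v b))" for X
    by (simp add: Pi_def mat_rsum[OF fin] trace_sum[OF fin] trace_outer_mult)
  have trPi: "trace Pi = real (card B)"
    using tPiX[of "mat 1"] unit by simp
  have trS: "trace S = 2 * real (card B) - real CARD('n)"
    by (simp only: Seq trace_add trace_sub trace_I trPi)
  have trSP: "trace (S ** P) = 2 * (\<Sum>b\<in>B. b \<bullet> (P *v b)) - trace P"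
    by (simp only: Seq mat_radd mat_rsub trace_add trace_sub matrix_mul_lid) (simp add: tPiX)
  define Q where "Q = P ** Pi ** P"
  have PP: "P ** P = mat 1" using oP by (rule oi_sqm)
  have PSP: "P ** S ** P = Q + Q - mat 1"
    by (simp only: Seq Q_def mat_radd mat_rsub matrix_add_ldistrib mat_lsub PP matrix_mul_rid matrix_mul_assoc)
  have trQ: "trace Q = real (card B)"
    by (metis Q_def PP matrix_mul_assoc matrix_mul_rid trPi trace_mul_sym)
  have trPiQ: "trace (Pi ** Q) = (\<Sum>b\<in>B. \<Sum>c\<in>B. ((P *v b) \<bullet> c)^2)"
  proof -
    have "b \<bullet> (Q *v b) = (\<Sum>c\<in>B. ((P *v b) \<bullet> c)^2)" for b
    proof -
      have "b \<bullet> (Q *v b) = (P *v b) \<bullet> (Pi *v (P *v b))"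
        using sym_inner[OF symP, of b "Pi *v (P *v b)"]
        by (simp add: Q_def matrix_vector_mul_assoc[symmetric])
      also have "\<dots> = (\<Sum>c\<in>B. ((P *v b) \<bullet> c)^2)"
        by (simp add: Pix inner_sum_right inner_commute power2_eq_square)
      finally show ?thesis .
    qed
    thus ?thesis by (simp add: tPiX)
  qed
  have trSPSP: "trace (S ** P ** S ** P) = 4 * (\<Sum>b\<in>B. \<Sum>c\<in>B. ((P *v b) \<bullet> c)^2) - 4 * real (card B) + real CARD('n)"
  proof -
    have "S ** P ** S ** P = S ** (P ** S ** P)" by (simp add: matrix_mul_assoc)
    also have "\<dots> = (Pi + Pi - mat 1) ** (Q + Q - mat 1)" by (simp only: PSP flip: Seq)
    finally show ?thesis
      by (simp only: mat_radd mat_rsub matrix_add_ldistrib mat_lsub trace_add trace_sub trace_I trPiQ trQ trPi matrix_mul_lid matrix_mul_rid)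
  qed
  show ?thesis
    unfolding A_minus_def Let_def trS trSP trSPSP
    by (simp add: algebra_simps power2_eq_square)
qed

lemma lagrange:
  fixes x :: "'a \<Rightarrow> real"
  assumes "finite B"
  shows "(\<Sum>b\<in>B. \<Sum>c\<in>B. (x b - x c)^2) = 2 * (real (card B) * (\<Sum>b\<in>B. (x b)^2) - (\<Sum>b\<in>B. x b)^2)"
proof -
  have "(\<Sum>b\<in>B. \<Sum>c\<in>B. (x b - x c)^2) = (\<Sum>b\<in>B. \<Sum>c\<in>B. (x b)^2 + (x c)^2 - 2 * (x b * x c))"
    by (simp add: power2_diff mult.assoc)
  also have "\<dots> = (\<Sum>b\<in>B. real (card B) * (x b)^2 + (\<Sum>c\<in>B. (x c)^2) - 2 * (x b * (\<Sum>c\<in>B. x c)))"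
    by (simp only: sum.distrib sum_subtractf sum_distrib_left[symmetric] sum_constant)
  also have "\<dots> = real (card B) * (\<Sum>b\<in>B. (x b)^2) + real (card B) * (\<Sum>c\<in>B. (x c)^2) - 2 * ((\<Sum>b\<in>B. x b) * (\<Sum>c\<in>B. x c))"
    by (simp only: sum.distrib sum_subtractf sum_constant sum_distrib_left[symmetric] sum_distrib_right[symmetric]; simp)
  finally show ?thesis by (simp add: power2_eq_square algebra_simps)
qed

lemma analysis:
  fixes P :: "real^'n^'n" and B :: "(real^'n) set"
  assumes oP: "orth_involution P"
    and fin: "finite B" and orth: "pairwise orthogonal B" and unit: "\<And>b. b\<in>B \<Longrightarrow> b \<bullet> b = 1"
  defines "F \<equiv> (real (card B))^2 - real (card B)
           + (\<Sum>b\<in>B. \<Sum>c\<in>B. ((P *v b) \<bullet> c)^2) - (\<Sum>b\<in>B. b \<bullet> (P *v b))^2"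
  shows "F \<ge> 0" "card B = 1 \<Longrightarrow> F = 0"
    "card B \<ge> 2 \<Longrightarrow> F = 0 \<longleftrightarrow> (\<exists>e\<in>{-1,1::real}. \<forall>b\<in>B. P *v b = e *\<^sub>R b)"
proof -
  have symP: "transpose P = P" using oP by (rule oi_sym)
  define x where "x b = b \<bullet> (P *v b)" for b
  define k where "k = real (card B)"
  define d where "d = (\<Sum>b\<in>B. (x b)^2)"
  define a where "a = (\<Sum>b\<in>B. x b)"
  define off where "off = (\<Sum>b\<in>B. \<Sum>c\<in>B-{b}. ((P *v b) \<bullet> c)^2)"
  have PbPb: "(P *v b) \<bullet> (P *v b) = b \<bullet> b" for b
    using sym_inner[OF symP, of b "P *v b"] oi_sq[OF oP, of b] by simp
  have xle: "(x b)^2 \<le> 1" if "b \<in> B" for b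
  proof -
    have nb: "norm b = 1" using unit[OF that] by (simp add: norm_eq_sqrt_inner)
    have nPb: "norm (P *v b) = 1" using unit[OF that] PbPb[of b] by (simp add: norm_eq_sqrt_inner)
    have "\<bar>x b\<bar> \<le> 1" using Cauchy_Schwarz_ineq2[of b "P *v b"] nb nPb by (simp add: x_def)
    thus ?thesis by (simp add: abs_square_le_1)
  qed
  have xeq: "P *v b = x b *\<^sub>R b" if "b \<in> B" "(x b)^2 = 1" for b
  proof -
    have "(P *v b - x b *\<^sub>R b) \<bullet> (P *v b - x b *\<^sub>R b) = 0"
      using that unit[OF that(1)] PbPb[of b]
      by (simp add: inner_diff_left inner_diff_right x_def inner_commute power2_eq_square)
    thus ?thesis by simp
  qed
  have qsplit: "(\<Sum>b\<in>B. \<Sum>c\<in>B. ((P *v b) \<bullet> c)^2) = d + off"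
  proof -
    have "(\<Sum>c\<in>B. ((P *v b) \<bullet> c)^2) = (x b)^2 + (\<Sum>c\<in>B-{b}. ((P *v b) \<bullet> c)^2)" if "b \<in> B" for b
      using fin that by (simp add: sum.remove x_def inner_commute)
    hence "(\<Sum>b\<in>B. \<Sum>c\<in>B. ((P *v b) \<bullet> c)^2) = (\<Sum>b\<in>B. (x b)^2 + (\<Sum>c\<in>B-{b}. ((P *v b) \<bullet> c)^2))"
      by (rule sum.cong[OF refl])
    thus ?thesis by (simp add: sum.distrib d_def off_def)
  qed
  have offnn: "off \<ge> 0" unfolding off_def by (intro sum_nonneg) auto
  have lag: "(\<Sum>b\<in>B. \<Sum>c\<in>B. (x b - x c)^2) = 2 * (k * d - a^2)"
    unfolding k_def d_def a_def by (rule lagrange[OF fin])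
  have lagnn: "k * d - a^2 \<ge> 0"
  proof -
    have "(\<Sum>b\<in>B. \<Sum>c\<in>B. (x b - x c)^2) \<ge> 0" by (intro sum_nonneg) auto
    thus ?thesis using lag by simp
  qed
  have dle: "d \<le> k" unfolding d_def k_def
    using sum_mono[of B "\<lambda>b. (x b)^2" "\<lambda>_. 1"] xle by simp
  have Feq: "F = (k - 1) * (k - d) + off + (k * d - a^2)"
    unfolding F_def qsplit by (simp add: k_def[symmetric] a_def x_def algebra_simps power2_eq_square)
  have first: "(k - 1) * (k - d) \<ge> 0"
  proof (cases "B = {}")
    case True thus ?thesis by (simp add: k_def d_def)
  next
    case False
    hence "k \<ge> 1" using fin by (simp add: k_def Suc_leI card_gt_0_iff)
    thus ?thesis using dle by simp
  qed
  show "F \<ge> 0" using Feq first offnn lagnn by linarith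
  show "F = 0" if "card B = 1"
  proof -
    obtain b where B: "B = {b}" using \<open>card B = 1\<close> card_1_singletonE by blast
    show ?thesis by (simp add: F_def B x_def inner_commute)
  qed
  assume k2: "card B \<ge> 2"
  have kk: "k \<ge> 2" using k2 by (simp add: k_def)
  show "F = 0 \<longleftrightarrow> (\<exists>e\<in>{-1,1::real}. \<forall>b\<in>B. P *v b = e *\<^sub>R b)"
  proof
    assume F0: "F = 0"
    have t1: "(k - 1) * (k - d) = 0" and t3: "k * d - a^2 = 0"
      using Feq first offnn lagnn F0 by linarith+
    have "k - d = 0" using t1 kk by simp
    hence "(\<Sum>b\<in>B. 1 - (x b)^2) = 0" by (simp add: sum_subtractf d_def k_def)
    hence x1: "(x b)^2 = 1" if "b \<in> B" for b
      using sum_nonneg_eq_0_iff[OF fin, of "\<lambda>b. 1 - (x b)^2"] xle that by auto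
    have "(\<Sum>b\<in>B. \<Sum>c\<in>B. (x b - x c)^2) = 0" using lag t3 by simp
    hence xc: "x b = x c" if "b \<in> B" "c \<in> B" for b c
    proof -
      assume h: "(\<Sum>b\<in>B. \<Sum>c\<in>B. (x b - x c)^2) = 0"
      have "(\<Sum>c\<in>B. (x b - x c)^2) = 0"
        using sum_nonneg_eq_0_iff[OF fin, of "\<lambda>b. \<Sum>c\<in>B. (x b - x c)^2"] h that(1)
        by (simp add: sum_nonneg)
      hence "(x b - x c)^2 = 0" using sum_nonneg_eq_0_iff[OF fin, of "\<lambda>c. (x b - x c)^2"] that(2) by simp
      thus ?thesis by simp
    qed
    obtain b0 where b0: "b0 \<in> B" using k2 by fastforce
    have "x b0 \<in> {-1, 1}" using x1[OF b0] by (auto simp: power2_eq_1_iff)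
    moreover have "\<forall>b\<in>B. P *v b = x b0 *\<^sub>R b"
      using xeq x1 xc b0 by metis
    ultimately show "\<exists>e\<in>{-1,1::real}. \<forall>b\<in>B. P *v b = e *\<^sub>R b" by blast
  next
    assume "\<exists>e\<in>{-1,1::real}. \<forall>b\<in>B. P *v b = e *\<^sub>R b"
    then obtain e where e: "e \<in> {-1,1::real}" and Pb: "\<And>b. b \<in> B \<Longrightarrow> P *v b = e *\<^sub>R b" by blast
    have e2: "e^2 = 1" using e by auto
    have xb: "x b = e" if "b \<in> B" for b using Pb[OF that] unit[OF that] by (simp add: x_def)
    have "off = 0" unfolding off_def
      using Pb orth by (intro sum.neutral ballI) (auto simp: pairwise_def orthogonal_def)
    moreover have "d = k" by (simp add: d_def k_def xb e2)
    moreover have "a = k * e" by (simp add: a_def k_def xb)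
    ultimately show "F = 0" using Feq e2 by (simp add: power_mult_distrib power2_eq_square)
  qed
qed

lemma subspace_eigsp: "subspace (eigsp (F::real^'n^'n) e)"
  unfolding subspace_def eigsp_def
  by (simp add: matrix_vector_right_distrib matrix_vector_mult_scaleR scaleR_add_right)

lemma core:
  fixes S P :: "real^'n^'n"
  assumes oS: "orth_involution S" and oP: "orth_involution P"
  shows "A_minus S P \<ge> 0" "dim (eigsp S 1) = 1 \<Longrightarrow> A_minus S P = 0"
    "dim (eigsp S 1) \<ge> 2 \<Longrightarrow> A_minus S P = 0 \<longleftrightarrow> (\<exists>e\<in>{-1, 1::real}. eigsp S 1 \<subseteq> eigsp P e)"
proof -
  obtain B where BS: "B \<subseteq> eigsp S 1" and orth: "pairwise orthogonal B"
    and n1: "\<And>x. x \<in> B \<Longrightarrow> norm x = 1" and ind: "independent B"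
    and cB: "card B = dim (eigsp S 1)" and spB: "span B = eigsp S 1"
    using orthonormal_basis_subspace[OF subspace_eigsp] by metis
  have fin: "finite B" using ind by (rule independent_imp_finite)
  have unit: "\<And>b. b \<in> B \<Longrightarrow> b \<bullet> b = 1" using n1 by (simp add: norm_eq_1)
  note fo = formula[OF oS oP fin orth unit spB]
  note an = analysis[OF oP fin orth unit]
  show "A_minus S P \<ge> 0" using fo an(1) by simp
  show "A_minus S P = 0" if "dim (eigsp S 1) = 1" using fo an(2) that cB by simp
  assume "dim (eigsp S 1) \<ge> 2"
  hence "A_minus S P = 0 \<longleftrightarrow> (\<exists>e\<in>{-1,1::real}. \<forall>b\<in>B. P *v b = e *\<^sub>R b)"
  proof -
    have "A_minus S P = 0 \<longleftrightarrow> (real (card B))\<^sup>2 - real (card B) +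
           (\<Sum>b\<in>B. \<Sum>c\<in>B. ((P *v b) \<bullet> c)\<^sup>2) - (\<Sum>b\<in>B. b \<bullet> (P *v b))\<^sup>2 = 0"
      by (simp only: fo mult_eq_0_iff) simp
    thus ?thesis using an(3) cB \<open>dim (eigsp S 1) \<ge> 2\<close> by simp
  qed
  also have "\<dots> \<longleftrightarrow> (\<exists>e\<in>{-1, 1::real}. eigsp S 1 \<subseteq> eigsp P e)"
  proof -
    have "(\<forall>b\<in>B. P *v b = e *\<^sub>R b) \<longleftrightarrow> eigsp S 1 \<subseteq> eigsp P e" for e
    proof
      assume "\<forall>b\<in>B. P *v b = e *\<^sub>R b"
      hence "B \<subseteq> eigsp P e" by (auto simp: eigsp_def)
      thus "eigsp S 1 \<subseteq> eigsp P e" using span_minimal[OF _ subspace_eigsp] spB by metis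
    next
      assume "eigsp S 1 \<subseteq> eigsp P e"
      thus "\<forall>b\<in>B. P *v b = e *\<^sub>R b" using BS by (auto simp: eigsp_def)
    qed
    thus ?thesis by blast
  qed
  finally show "A_minus S P = 0 \<longleftrightarrow> (\<exists>e\<in>{-1, 1::real}. eigsp S 1 \<subseteq> eigsp P e)" .
qed

lemma neg_oi: "orth_involution (S::real^'n^'n) \<Longrightarrow> orth_involution (- S)"
proof -
  have t: "transpose (- S) = - transpose S" by (simp add: transpose_def vec_eq_iff)
  have m: "(- A) ** (- B) = A ** (B::real^'n^'n)" for A B
    by (simp add: matrix_matrix_mult_def vec_eq_iff)
  assume "orth_involution S"
  thus ?thesis by (simp add: orth_involution_def orthogonal_matrix_def t m)
qed

lemma Aplus_neg: "A_plus (S::real^'n^'n) P = A_minus (- S) P"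
proof -
  have tr: "trace (- A) = - trace (A::real^'n^'n)" for A by (simp add: trace_def sum_negf)
  have m: "(- A) ** B = - (A ** (B::real^'n^'n))" for A B
    by (simp add: matrix_matrix_mult_def vec_eq_iff sum_negf)
  have m2: "A ** (- B) = - (A ** (B::real^'n^'n))" for A B
    by (simp add: matrix_matrix_mult_def vec_eq_iff sum_negf)
  show ?thesis unfolding A_plus_def A_minus_def Let_def
    by (simp add: tr m m2)
qed

lemma eigsp_neg: "eigsp (- (S::real^'n^'n)) 1 = eigsp S (-1)"
proof -
  have "(- S) *v v = - (S *v v)" for v by (simp add: matrix_vector_mult_def vec_eq_iff sum_negf)
  thus ?thesis unfolding eigsp_def by (auto simp: minus_equation_iff)
qed

theorem theorem5p4:
  fixes M :: "'m set" and S P :: "'m \<Rightarrow> real^'n^'n"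
  assumes S_inv: "\<forall>x\<in>M. orth_involution (S x)"
      and S_nontriv: "\<forall>x\<in>M. S x \<noteq> mat 1 \<and> S x \<noteq> - mat 1"
      and P_inv: "\<forall>x\<in>M. orth_involution (P x)"
      and P_nontriv: "\<forall>x\<in>M. P x \<noteq> mat 1 \<and> P x \<noteq> - mat 1"
  shows "(\<forall>x\<in>M. A_plus (S x) (P x) \<ge> 0 \<and> A_minus (S x) (P x) \<ge> 0)
    \<and> ((\<forall>x\<in>M. dim (eigsp (S x) 1) = 1) \<longrightarrow> (\<forall>x\<in>M. A_minus (S x) (P x) = 0))
    \<and> ((\<forall>x\<in>M. dim (eigsp (S x) 1) \<ge> 2) \<longrightarrow> (\<forall>x\<in>M. A_minus (S x) (P x) = 0 \<longleftrightarrow>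
          (\<exists>e\<in>{-1, 1::real}. eigsp (S x) 1 \<subseteq> eigsp (P x) e)))
    \<and> ((\<forall>x\<in>M. dim (eigsp (S x) (-1)) = 1) \<longrightarrow> (\<forall>x\<in>M. A_plus (S x) (P x) = 0))
    \<and> ((\<forall>x\<in>M. dim (eigsp (S x) (-1)) \<ge> 2) \<longrightarrow> (\<forall>x\<in>M. A_plus (S x) (P x) = 0 \<longleftrightarrow>
          (\<exists>e\<in>{-1, 1::real}. eigsp (S x) (-1) \<subseteq> eigsp (P x) e)))"
proof -
  have m: "A_minus (S x) (P x) \<ge> 0" "dim (eigsp (S x) 1) = 1 \<Longrightarrow> A_minus (S x) (P x) = 0"
    "dim (eigsp (S x) 1) \<ge> 2 \<Longrightarrow> A_minus (S x) (P x) = 0 \<longleftrightarrow> (\<exists>e\<in>{-1, 1::real}. eigsp (S x) 1 \<subseteq> eigsp (P x) e)"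
    if "x \<in> M" for x using core[of "S x" "P x"] S_inv P_inv that by auto
  have p: "A_plus (S x) (P x) \<ge> 0" "dim (eigsp (S x) (-1)) = 1 \<Longrightarrow> A_plus (S x) (P x) = 0"
    "dim (eigsp (S x) (-1)) \<ge> 2 \<Longrightarrow> A_plus (S x) (P x) = 0 \<longleftrightarrow> (\<exists>e\<in>{-1, 1::real}. eigsp (S x) (-1) \<subseteq> eigsp (P x) e)"
    if "x \<in> M" for x
    using core[of "- S x" "P x"] neg_oi[of "S x"] S_inv P_inv that
    by (auto simp: Aplus_neg eigsp_neg)
  show ?thesis using m p by blast
qed

end
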